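(* For all $x,y\ge 1$ with $x\ne y$ and all $n\ge\max(x,y)$, the $(x,y)$ edge-removal process on $n$ vertices does not necessarily result in an $(x,y)$ task-dependency graph; that is, with positive probability its result is not an $(x,y)$ task-dependency graph.
   Context: A task-dependency graph is a finite directed acyclic graph (no loops, no multiple edges). A vertex is initial if it has in-degree $0$ and terminal if it has out-degree $0$ (an isolated vertex is both). An $(x,y)$ task-dependency graph has exactly $x$ initial and exactly $y$ terminal vertices. The $(x,y)$ edge-removal process on $n$ vertices: start with the task-dependency graph on $\{1,\dots,n\}$ having all edges $(a,b)$ with $a<b$. Edges are removed uniformly at random, one at a time; a removal that would cause more than $x$ initial vertices or more than $y$ terminal vertices is cancelled. The process terminates when no further edge can be removed. *)

theory Defs
  imports "HOL-Probability.Probability"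
begin

definition complete_edges :: "nat \<Rightarrow> (nat \<times> nat) set" where
  "complete_edges n = {(a, b). a \<in> {1..n} \<and> b \<in> {1..n} \<and> a < b}"

definition initial_vs :: "nat \<Rightarrow> (nat \<times> nat) set \<Rightarrow> nat set" where
  "initial_vs n E = {v \<in> {1..n}. \<not> (\<exists>u. (u, v) \<in> E)}"

definition terminal_vs :: "nat \<Rightarrow> (nat \<times> nat) set \<Rightarrow> nat set" where
  "terminal_vs n E = {v \<in> {1..n}. \<not> (\<exists>w. (v, w) \<in> E)}"

text \<open>An (x,y) task-dependency graph on {1..n} whose edges go from smaller to larger
  vertices (hence it is automatically acyclic, without loops or multiple edges).\<close>
definition is_xy_tdg :: "nat \<Rightarrow> nat \<Rightarrow> nat \<Rightarrow> (nat \<times> nat) set \<Rightarrow> bool" where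
  "is_xy_tdg x y n E \<longleftrightarrow> E \<subseteq> complete_edges n \<and>
     card (initial_vs n E) = x \<and> card (terminal_vs n E) = y"

definition removable_edges :: "nat \<Rightarrow> nat \<Rightarrow> nat \<Rightarrow> (nat \<times> nat) set \<Rightarrow> (nat \<times> nat) set" where
  "removable_edges x y n E = {e \<in> E. card (initial_vs n (E - {e})) \<le> x \<and>
                                       card (terminal_vs n (E - {e})) \<le> y}"

text \<open>Choosing a uniformly random remaining edge and
  cancelling invalid removals makes the next effective removal uniform among the
  removable edges, which is what is modelled here.\<close>
fun erp_steps :: "nat \<Rightarrow> nat \<Rightarrow> nat \<Rightarrow> nat \<Rightarrow> (nat \<times> nat) set \<Rightarrow> (nat \<times> nat) set pmf" where
  "erp_steps x y n 0 E = return_pmf E"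
| "erp_steps x y n (Suc k) E =
     (if removable_edges x y n E = {} then return_pmf E
      else pmf_of_set (removable_edges x y n E) \<bind> (\<lambda>e. erp_steps x y n k (E - {e})))"

text \<open>The budget card (complete_edges n) suffices, since each step removes an edge.\<close>
definition edge_removal_process :: "nat \<Rightarrow> nat \<Rightarrow> nat \<Rightarrow> (nat \<times> nat) set pmf" where
  "edge_removal_process x y n =
     erp_steps x y n (card (complete_edges n)) (complete_edges n)"

end

theory Submission
  imports Defs
begin

lemma init_anti: "A \<subseteq> B \<Longrightarrow> initial_vs n B \<subseteq> initial_vs n A"
  unfolding initial_vs_def by auto

lemma term_anti: "A \<subseteq> B \<Longrightarrow> terminal_vs n B \<subseteq> terminal_vs n A"
  unfolding terminal_vs_def by auto

lemma fin_init: "finite (initial_vs n E)" unfolding initial_vs_def by auto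
lemma fin_term: "finite (terminal_vs n E)" unfolding terminal_vs_def by auto

lemma fin_complete: "finite (complete_edges n)"
proof -
  have "complete_edges n \<subseteq> {1..n} \<times> {1..n}" unfolding complete_edges_def by auto
  thus ?thesis by (rule finite_subset) auto
qed

lemma stuck_steps:
  assumes "removable_edges x y n G = {}"
  shows "erp_steps x y n k G = return_pmf G"
  using assms by (cases k) auto

lemma reach:
  assumes stuck: "removable_edges x y n G = {}"
    and rem: "\<And>E e. G \<subseteq> E \<Longrightarrow> E \<subseteq> C \<Longrightarrow> e \<in> E - G \<Longrightarrow> e \<in> removable_edges x y n E"
    and finC: "finite C"
  shows "G \<subseteq> E \<Longrightarrow> E \<subseteq> C \<Longrightarrow> card (E - G) \<le> k \<Longrightarrow> G \<in> set_pmf (erp_steps x y n k E)"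
proof (induction k arbitrary: E)
  case 0
  have "finite E" using 0 finC finite_subset by blast
  hence "E - G = {}" using 0 by auto
  hence "E = G" using 0 by auto
  thus ?case by simp
next
  case (Suc k)
  have finE: "finite E" using Suc finC finite_subset by blast
  show ?case
  proof (cases "E = G")
    case True
    thus ?thesis using stuck_steps[OF stuck, of "Suc k"] by simp
  next
    case False
    then obtain e where e: "e \<in> E - G" using Suc.prems by auto
    have eR: "e \<in> removable_edges x y n E" using rem[OF Suc.prems(1,2) e] .
    have neR: "removable_edges x y n E \<noteq> {}" using eR by auto
    have finR: "finite (removable_edges x y n E)"
      using finE unfolding removable_edges_def by auto
    have "card (E - G) = Suc (card ((E - {e}) - G))"
    proof -
      have "E - G = insert e ((E - {e}) - G)" using e by auto
      thus ?thesis using finE by (simp add: card_insert_disjoint)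
    qed
    hence c: "card ((E - {e}) - G) \<le> k" using Suc.prems(3) by simp
    have "G \<in> set_pmf (erp_steps x y n k (E - {e}))"
      using Suc.IH[of "E - {e}"] Suc.prems e c by auto
    thus ?thesis using neR finR eR by auto
  qed
qed

theorem mainTheorem5:
  fixes x y n :: nat
  assumes "x \<ge> 1" and "y \<ge> 1" and "x \<noteq> y" and "n \<ge> max x y"
  shows "measure_pmf.prob (edge_removal_process x y n) {E. \<not> is_xy_tdg x y n E} > 0"
proof -
  define z where "z = min x y"
  define m where "m = n - z + 1"
  define G where "G = {(a, a + 1) | a. 1 \<le> a \<and> a + 1 \<le> m}"
  have zn: "z < n" using assms unfolding z_def by auto
  have z1: "z \<ge> 1" using assms unfolding z_def by auto
  have m2: "2 \<le> m" "m \<le> n" using zn z1 unfolding m_def by auto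
  have GC: "G \<subseteq> complete_edges n" unfolding G_def complete_edges_def using m2 by auto
  have IG: "initial_vs n G = insert 1 {m+1..n}"
    unfolding initial_vs_def G_def using m2 by (auto, presburger)
  have TG: "terminal_vs n G = {m..n}"
    unfolding terminal_vs_def G_def using m2 by auto
  have cIG: "card (initial_vs n G) = z" unfolding IG using m2 zn unfolding m_def by auto
  have cTG: "card (terminal_vs n G) = z" unfolding TG using m2 zn unfolding m_def by auto
  have stuck: "removable_edges x y n G = {}"
  proof (rule ccontr)
    assume "removable_edges x y n G \<noteq> {}"
    then obtain e where e: "e \<in> G" and ci: "card (initial_vs n (G - {e})) \<le> x"
      and ct: "card (terminal_vs n (G - {e})) \<le> y"
      unfolding removable_edges_def by auto
    obtain a where a: "e = (a, a+1)" "1 \<le> a" "a + 1 \<le> m" using e unfolding G_def by auto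
    have "insert (a+1) (initial_vs n G) \<subseteq> initial_vs n (G - {e})"
      unfolding initial_vs_def G_def using a m2 by auto
    moreover have "a + 1 \<notin> initial_vs n G" unfolding IG using a by auto
    ultimately have i: "z + 1 \<le> card (initial_vs n (G - {e}))"
      using cIG fin_init card_mono[OF fin_init] by (metis Suc_eq_plus1 card_insert_disjoint fin_init)
    have "insert a (terminal_vs n G) \<subseteq> terminal_vs n (G - {e})"
      unfolding terminal_vs_def G_def using a m2 by auto
    moreover have "a \<notin> terminal_vs n G" unfolding TG using a by auto
    ultimately have t: "z + 1 \<le> card (terminal_vs n (G - {e}))"
      using cTG fin_term card_mono[OF fin_term] by (metis Suc_eq_plus1 card_insert_disjoint fin_term)
    show False using i t ci ct unfolding z_def by auto
  qed
  have rem: "e \<in> removable_edges x y n E"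
    if "G \<subseteq> E" "E \<subseteq> complete_edges n" "e \<in> E - G" for E e
  proof -
    have "G \<subseteq> E - {e}" using that by auto
    hence "card (initial_vs n (E - {e})) \<le> z" "card (terminal_vs n (E - {e})) \<le> z"
      using card_mono[OF fin_init init_anti] card_mono[OF fin_term term_anti] cIG cTG by metis+
    thus ?thesis using that unfolding removable_edges_def z_def by auto
  qed
  have "G \<in> set_pmf (edge_removal_process x y n)"
    unfolding edge_removal_process_def
    by (rule reach[OF stuck rem fin_complete]) (auto simp: GC intro: card_mono fin_complete)
  moreover have "\<not> is_xy_tdg x y n G"
    unfolding is_xy_tdg_def using cIG cTG assms(3) by auto
  ultimately show ?thesis by (intro measure_pmf_posI) auto
qed

end
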